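(* Let $\alpha,\beta,\gamma,\lambda,x$ be non-negative integers with $(\alpha,\beta,\gamma,x)\neq(0,0,0,0)$. Then for every integer $n\ge0$, $$T_{n+1}^{\lambda,x}(\alpha,\beta,\gamma)=\gamma\,T_n^{\lambda,x}(\alpha,\beta,\gamma-\alpha)+x\lambda\beta\,T_n^{\lambda+1,x}(\alpha,\beta,\gamma+\beta-\alpha).$$
   Context: For complex numbers $c,\alpha$ and an integer $n\ge 0$ let $(c|\alpha)_n=\prod_{i=0}^{n-1}(c-i\alpha)$, with $(c|\alpha)_0=1$. Let $E_{\alpha,c}(t)=\sum_{n\ge 0}(c|\alpha)_n\,t^n/n!$, viewed as a formal power series in $t$. It equals $(1+\alpha t)^{c/\alpha}$ if $\alpha\neq0$ and $e^{ct}$ if $\alpha=0$. For complex $\alpha,\beta,\gamma,x$ and a non-negative integer $\lambda$, the numbers $T_n^{\lambda,x}(\alpha,\beta,\gamma)$, $n\ge0$, are defined by the formal power series identity $$\sum_{n\ge0}T_n^{\lambda,x}(\alpha,\beta,\gamma)\frac{t^n}{n!}=E_{\alpha,\gamma}(t)\,\bigl(1-x(E_{\alpha,\beta}(t)-1)\bigr)^{-\lambda}.$$ The third argument may be any complex number. *)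

theory Defs
  imports "HOL-Computational_Algebra.Formal_Power_Series"
begin

definition gen_fall :: "complex \<Rightarrow> complex \<Rightarrow> nat \<Rightarrow> complex" where
  "gen_fall c \<alpha> n = (\<Prod>i<n. c - of_nat i * \<alpha>)"

definition E_fps :: "complex \<Rightarrow> complex \<Rightarrow> complex fps" where
  "E_fps \<alpha> c = Abs_fps (\<lambda>n. gen_fall c \<alpha> n / fact n)"

text \<open>Generating function E_{alpha,gamma}(t) (1 - x(E_{alpha,beta}(t) - 1))^(-lambda).
  The inner series has constant term 1, so the fps inverse is the genuine inverse.\<close>
definition T_gf :: "nat \<Rightarrow> complex \<Rightarrow> complex \<Rightarrow> complex \<Rightarrow> complex \<Rightarrow> complex fps" where
  "T_gf lam x \<alpha> \<beta> \<gamma> =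
     E_fps \<alpha> \<gamma> * inverse (1 - fps_const x * (E_fps \<alpha> \<beta> - 1)) ^ lam"

definition T :: "nat \<Rightarrow> nat \<Rightarrow> complex \<Rightarrow> complex \<Rightarrow> complex \<Rightarrow> complex \<Rightarrow> complex" where
  "T n lam x \<alpha> \<beta> \<gamma> = fact n * fps_nth (T_gf lam x \<alpha> \<beta> \<gamma>) n"

end

theory Submission
  imports Defs
begin

notation fps_nth (infixl \<open>$\<close> 75)

lemma E_nth: "E_fps a c $ n = gen_fall c a n / fact n"
  by (simp add: E_fps_def)

lemma gen_fall_Suc: "gen_fall c a (Suc n) = c * gen_fall (c - a) a n"
  unfolding gen_fall_def prod.lessThan_Suc_shift
  by (simp add: algebra_simps)

lemma gen_fall_Suc2: "gen_fall c a (Suc n) = gen_fall c a n * (c - of_nat n * a)"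
  unfolding gen_fall_def prod.lessThan_Suc by (simp only: mult.commute)

lemma E_0: "E_fps a c $ 0 = 1"
  by (simp add: E_nth gen_fall_def)

lemma E_deriv: "fps_deriv (E_fps a c) = fps_const c * E_fps a (c - a)"
proof (rule fps_ext)
  fix n
  have "fact (Suc n) = (of_nat (Suc n) :: complex) * fact n" by simp
  then show "fps_deriv (E_fps a c) $ n = (fps_const c * E_fps a (c - a)) $ n"
    by (simp add: E_nth gen_fall_Suc field_simps del: of_nat_Suc fact_Suc)
qed

lemma ode_coeff:
  "((1 + fps_const a * fps_X) * fps_deriv H) $ n
     = of_nat (n+1) * H$(n+1) + a * of_nat n * H $ n"
  by (cases n) (simp_all add: distrib_right mult.assoc)

lemma E_rec: "of_nat (n+1) * E_fps a c $ (n+1) = (c - of_nat n * a) * E_fps a c $ n"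
proof -
  have "fact (Suc n) = (of_nat (Suc n) :: complex) * fact n" by simp
  then show ?thesis
    by (simp add: E_nth gen_fall_Suc2 field_simps del: of_nat_Suc fact_Suc)
qed

lemma E_ode: "(1 + fps_const a * fps_X) * fps_deriv (E_fps a c) = fps_const c * E_fps a c"
proof (rule fps_ext)
  fix n
  show "((1 + fps_const a * fps_X) * fps_deriv (E_fps a c)) $ n = (fps_const c * E_fps a c) $ n"
    unfolding ode_coeff using E_rec[of n a c] by (simp add: algebra_simps)
qed

lemma E_unique:
  assumes "(1 + fps_const a * fps_X) * fps_deriv H = fps_const c * H" "H $ 0 = 1"
  shows "H = E_fps a c"
proof (rule fps_ext)
  fix n
  show "H $ n = E_fps a c $ n"
  proof (induction n)
    case 0 then show ?case using assms by (simp add: E_0)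
  next
    case (Suc n)
    have "((1 + fps_const a * fps_X) * fps_deriv H) $ n = (fps_const c * H) $ n"
      using assms(1) by simp
    then have h: "of_nat (n+1) * H$(n+1) = (c - of_nat n * a) * H $ n"
      unfolding ode_coeff by (simp add: algebra_simps)
    have "of_nat (n+1) * H$(n+1) = of_nat (n+1) * E_fps a c $ (n+1)"
      using h E_rec[of n a c] Suc by simp
    then show ?case by (metis Suc_eq_plus1 mult_cancel_left of_nat_eq_0_iff nat.simps(3))
  qed
qed

lemma E_add: "E_fps a p * E_fps a q = E_fps a (p + q)"
proof (rule E_unique)
  let ?L = "1 + fps_const a * fps_X"
  have "?L * fps_deriv (E_fps a p * E_fps a q)
      = E_fps a p * (?L * fps_deriv (E_fps a q)) + (?L * fps_deriv (E_fps a p)) * E_fps a q"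
    unfolding fps_deriv_mult by (simp only: distrib_left mult_ac)
  also have "\<dots> = fps_const (p + q) * (E_fps a p * E_fps a q)"
    unfolding E_ode fps_const_add[symmetric] by (simp only: distrib_left distrib_right mult_ac add_ac)
  finally show "?L * fps_deriv (E_fps a p * E_fps a q) = fps_const (p + q) * (E_fps a p * E_fps a q)" .
  show "(E_fps a p * E_fps a q) $ 0 = 1" by (simp add: E_0)
qed

lemma main_deriv:
  fixes a b g x :: complex and lam :: nat
  shows "fps_deriv (T_gf lam x a b g) =
     fps_const g * T_gf lam x a b (g - a) + fps_const (x * of_nat lam * b) * T_gf (lam+1) x a b (g + b - a)"
proof -
  define Q where "Q = 1 - fps_const x * (E_fps a b - 1)"
  define P where "P = inverse Q"
  have Q0: "Q $ 0 = 1" by (simp add: Q_def E_0)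
  have neg: "fps_const (-x) = - fps_const x" by simp
  have DQ: "fps_deriv Q = - fps_const x * (fps_const b * E_fps a (b - a))"
    by (simp add: Q_def E_deriv) (simp only: neg mult_minus_left)
  have "fps_deriv P = - fps_deriv Q * P^2"
    unfolding P_def by (rule fps_inverse_deriv) (simp add: Q0)
  also have "\<dots> = fps_const x * fps_const b * E_fps a (b - a) * P^2"
    unfolding DQ by (simp only: mult_minus_left minus_minus mult.assoc)
  finally have DP: "fps_deriv P = fps_const x * fps_const b * E_fps a (b - a) * P^2" .
  have TG: "\<And>l c. T_gf l x a b c = E_fps a c * P ^ l"
    by (simp add: T_gf_def P_def Q_def)
  have EE: "E_fps a g * E_fps a (b - a) = E_fps a (g + b - a)"
    by (simp add: E_add add_diff_eq)
  have "fps_deriv (E_fps a g * P ^ lam) = E_fps a g * (fps_const (of_nat lam) * fps_deriv P * P ^ (lam - 1))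
          + fps_const g * E_fps a (g - a) * P ^ lam"
    by (simp add: fps_deriv_power E_deriv)
  also have "E_fps a g * (fps_const (of_nat lam) * fps_deriv P * P ^ (lam - 1))
       = fps_const (x * of_nat lam * b) * (E_fps a (g + b - a) * P ^ (lam + 1))"
  proof (cases lam)
    case 0 then show ?thesis by simp
  next
    case (Suc m)
    have cm: "fps_const (x * of_nat lam * b) = fps_const x * fps_const (of_nat lam) * fps_const b"
      by (metis fps_const_mult)
    have "E_fps a g * (fps_const (of_nat lam) * fps_deriv P * P ^ (lam - 1))
        = fps_const (x * of_nat lam * b) * ((E_fps a g * E_fps a (b - a)) * (P^2 * P ^ m))"
      unfolding DP cm unfolding Suc by (simp only: diff_Suc_1 ac_simps)
    also have "P^2 * P ^ m = P ^ (lam + 1)" by (simp add: Suc power_add[symmetric])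
    finally show ?thesis unfolding EE .
  qed
  finally show ?thesis unfolding TG by (simp only: ac_simps)
qed

theorem theorem6:
  fixes \<alpha> \<beta> \<gamma> lam x n :: nat
  assumes "(\<alpha>, \<beta>, \<gamma>, x) \<noteq> (0, 0, 0, 0)"
  shows "T (n + 1) lam (of_nat x) (of_nat \<alpha>) (of_nat \<beta>) (of_nat \<gamma>) =
           of_nat \<gamma> * T n lam (of_nat x) (of_nat \<alpha>) (of_nat \<beta>) (of_nat \<gamma> - of_nat \<alpha>)
         + of_nat x * of_nat lam * of_nat \<beta> *
             T n (lam + 1) (of_nat x) (of_nat \<alpha>) (of_nat \<beta>) (of_nat \<gamma> + of_nat \<beta> - of_nat \<alpha>)"
proof -
  let ?F = "T_gf lam (of_nat x) (of_nat \<alpha>) (of_nat \<beta>) (of_nat \<gamma>)"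
  have f: "fact (n + 1) * ?F $ (n+1) = fact n * fps_deriv ?F $ n"
    unfolding fps_deriv_nth Suc_eq_plus1[symmetric] fact_Suc by (simp only: mult_ac)
  show ?thesis
    unfolding T_def f main_deriv fps_add_nth fps_mult_left_const_nth
    by (simp only: distrib_left mult.assoc mult.left_commute)
qed

end
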